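(* Let $D$ be a total clone on $\{0,1\}$ with $D \subseteq T_{0,2}$. Then $\mathcal{I}_{\mathrm{str}}(D)$ has the cardinality of the continuum.
   Context: Let $\mathbf{2}=\{0,1\}$. A partial function of arity $n$ on $\mathbf{2}$ is a map $f:\operatorname{dom} f\to\mathbf{2}$ with $\operatorname{dom} f\subseteq \mathbf{2}^n$; it is total if $\operatorname{dom} f=\mathbf{2}^n$. $P_{\mathbf{2}}$ is the set of all partial functions, $O_{\mathbf{2}}$ the set of total ones. Composition $F=f(g_1,\dots,g_n)$ is given by $F(\mathbf{x})=f(g_1(\mathbf{x}),\dots,g_n(\mathbf{x}))$ on $\operatorname{dom} F=\{\mathbf{x}\in\bigcap_i\operatorname{dom} g_i : (g_1(\mathbf{x}),\dots,g_n(\mathbf{x}))\in\operatorname{dom} f\}$. A partial clone is a composition-closed subset of $P_{\mathbf{2}}$ containing all projections; a total clone is one contained in $O_{\mathbf{2}}$. A partial clone $X$ is strong if it contains every restriction of each of its members. For a total clone $C$, $\mathcal{I}_{\mathrm{str}}(C)$ is the set of all strong partial clones $X$ with $X\cap O_{\mathbf{2}}=C$. A total $n$-ary $f$ preserves a binary relation $\rho$ if for all $(a_1,b_1),\dots,(a_n,b_n)\in\rho$ we have $(f(a_1,\dots,a_n),f(b_1,\dots,b_n))\in\rho$. $T_{0,2}$ is the clone of all total Boolean functions preserving $\rho_{0,2}=\{(0,0),(0,1),(1,0)\}$. *)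

theory Defs
  imports Complex_Main "HOL-Library.Equipollence"
begin

text \<open>Partial Boolean functions: a pair (n, f) where n is the arity and
  f :: bool list \<Rightarrow> bool option is a partial map whose domain consists of
  lists of length n (False = 0, True = 1).\<close>

type_synonym pfun = "nat \<times> (bool list \<Rightarrow> bool option)"

definition is_pfun :: "pfun \<Rightarrow> bool" where
  "is_pfun F \<longleftrightarrow> fst F \<ge> 1 \<and> dom (snd F) \<subseteq> {xs. length xs = fst F}"

definition P2 :: "pfun set" where
  "P2 = {F. is_pfun F}"

definition is_total :: "pfun \<Rightarrow> bool" where
  "is_total F \<longleftrightarrow> dom (snd F) = {xs. length xs = fst F}"

definition O2 :: "pfun set" where
  "O2 = {F \<in> P2. is_total F}"

definition proj :: "nat \<Rightarrow> nat \<Rightarrow> pfun" where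
  "proj n i = (n, \<lambda>xs. if length xs = n then Some (xs ! i) else None)"

definition pcomp :: "nat \<Rightarrow> pfun \<Rightarrow> pfun list \<Rightarrow> pfun" where
  "pcomp m f gs = (m, \<lambda>xs. if length xs = m \<and> (\<forall>g\<in>set gs. snd g xs \<noteq> None)
                          then snd f (map (\<lambda>g. the (snd g xs)) gs) else None)"

definition partial_clone :: "pfun set \<Rightarrow> bool" where
  "partial_clone X \<longleftrightarrow> X \<subseteq> P2
     \<and> (\<forall>n i. 1 \<le> n \<and> i < n \<longrightarrow> proj n i \<in> X)
     \<and> (\<forall>m f gs. m \<ge> 1 \<and> f \<in> X \<and> set gs \<subseteq> X \<and> fst f = length gs
            \<and> (\<forall>g\<in>set gs. fst g = m) \<longrightarrow> pcomp m f gs \<in> X)"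

definition total_clone :: "pfun set \<Rightarrow> bool" where
  "total_clone C \<longleftrightarrow> partial_clone C \<and> C \<subseteq> O2"

definition strong_partial_clone :: "pfun set \<Rightarrow> bool" where
  "strong_partial_clone X \<longleftrightarrow> partial_clone X
     \<and> (\<forall>F\<in>X. \<forall>A. (fst F, snd F |` A) \<in> X)"

definition I_str :: "pfun set \<Rightarrow> pfun set set" where
  "I_str C = {X. strong_partial_clone X \<and> X \<inter> O2 = C}"

definition rho02 :: "(bool \<times> bool) set" where
  "rho02 = {(False, False), (False, True), (True, False)}"

definition preserves :: "pfun \<Rightarrow> (bool \<times> bool) set \<Rightarrow> bool" where
  "preserves F \<rho> \<longleftrightarrow> (\<forall>as bs. length as = fst F \<and> length bs = fst F
      \<and> (\<forall>i < fst F. (as ! i, bs ! i) \<in> \<rho>)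
      \<longrightarrow> (the (snd F as), the (snd F bs)) \<in> \<rho>)"

definition T02 :: "pfun set" where
  "T02 = {F \<in> O2. preserves F rho02}"

end

theory Submission
  imports Defs "HOL-Analysis.Abstract_Topology_2"
begin


definition cadj :: "nat \<Rightarrow> nat \<Rightarrow> nat \<Rightarrow> bool" where
 "cadj m u v \<longleftrightarrow> u < m \<and> v < m \<and> (v = Suc u mod m \<or> u = Suc v mod m)"

lemma no_short_odd_walk:
  fixes x :: "nat \<Rightarrow> nat"
  assumes w: "\<forall>i<L. cadj m (x i) (x (Suc i))" and c: "x L = x 0" and o: "odd L" and lm: "L < m"
  shows False
proof -
  define s where "s i = (if x (Suc i) = Suc (x i) mod m then 1 else - 1 :: int)" for i
  have m0: "m > 0" using lm by simp
  have step: "int (x (Suc i)) mod int m = (int (x i) + s i) mod int m" if "i < L" for i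
  proof (cases "x (Suc i) = Suc (x i) mod m")
    case True
    then show ?thesis by (simp add: s_def zmod_int of_nat_mod mod_simps add.commute)
  next
    case False
    with w that have e: "x i = Suc (x (Suc i)) mod m" by (auto simp: cadj_def)
    have "(int (x i) + s i) mod int m = ((int (Suc (x (Suc i))) mod int m) - 1) mod int m"
      using False e by (simp add: s_def zmod_int)
    also have "\<dots> = int (x (Suc i)) mod int m" by (simp add: mod_simps)
    finally show ?thesis by simp
  qed
  have acc: "i \<le> L \<Longrightarrow> int (x i) mod int m = (int (x 0) + (\<Sum>t<i. s t)) mod int m" for i
  proof (induction i)
    case 0 then show ?case by simp
  next
    case (Suc i)
    then have "int (x (Suc i)) mod int m = (int (x i) + s i) mod int m" using step by simp
    also have "\<dots> = ((int (x i) mod int m) + s i) mod int m" by (simp add: mod_simps)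
    also have "\<dots> = (int (x 0) + (\<Sum>t<Suc i. s t)) mod int m" using Suc by (simp add: mod_simps add.assoc)
    finally show ?case .
  qed
  have par: "(\<Sum>t<i. s t) mod 2 = int i mod 2" for i
  proof (induction i)
    case 0 then show ?case by simp
  next
    case (Suc i)
    have "s i = 1 \<or> s i = -1" by (simp add: s_def)
    then show ?case using Suc by (simp, presburger)
  qed
  have bnd: "\<bar>\<Sum>t<i. s t\<bar> \<le> int i" for i
  proof (induction i)
    case 0 then show ?case by simp
  next
    case (Suc i)
    have "\<bar>s i\<bar> = 1" by (simp add: s_def)
    then show ?case using Suc by (simp add: abs_le_iff) linarith
  qed
  from acc[of L] c have "(int (x 0) + (\<Sum>t<L. s t)) mod int m = int (x 0) mod int m" by simp
  then have "int m dvd (\<Sum>t<L. s t)" by (simp add: mod_eq_dvd_iff algebra_simps)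
  moreover have "\<bar>\<Sum>t<L. s t\<bar> < int m" using bnd[of L] lm by simp
  ultimately have "(\<Sum>t<L. s t) = 0" using dvd_imp_le_int by force
  with par[of L] o show False by simp presburger
qed

definition cm :: "nat \<Rightarrow> nat" where "cm k = 2 * k + 5"
definition NN :: "nat \<Rightarrow> nat" where "NN k = cm k + (k + 4)"

definition gadj :: "nat \<Rightarrow> nat \<Rightarrow> nat \<Rightarrow> bool" where
 "gadj k u v \<longleftrightarrow> cadj (cm k) u v \<or> (cm k \<le> u \<and> cm k \<le> v \<and> u < NN k \<and> v < NN k \<and> u \<noteq> v)"

lemma cadj_sym: "cadj m u v = cadj m v u" by (auto simp: cadj_def)

lemma gadj_sym: "gadj k u v = gadj k v u" by (auto simp: gadj_def cadj_sym)

lemma cadj_irrefl: "m > 1 \<Longrightarrow> \<not> cadj m u u"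
  by (auto simp: cadj_def) (metis Suc_lessI mod_less mod_self n_not_Suc_n)

lemma gadj_irrefl: "\<not> gadj k u u"
  using cadj_irrefl[of "cm k" u] by (auto simp: gadj_def cm_def)

lemma cadj_lt: "cadj m u v \<Longrightarrow> u < m \<and> v < m" by (simp add: cadj_def)

lemma gadj_lt: "gadj k u v \<Longrightarrow> u < NN k \<and> v < NN k"
  unfolding gadj_def NN_def by (auto dest!: cadj_lt)

lemma gadj_cyc: "gadj k u v \<Longrightarrow> u < cm k \<Longrightarrow> cadj (cm k) u v"
  by (auto simp: gadj_def)

lemma tri_free:
  assumes "gadj j a b" "gadj j b c" "gadj j c a" "a < cm j"
  shows False
proof -
  have ab: "cadj (cm j) a b" using assms gadj_cyc by blast
  then have "b < cm j" by (simp add: cadj_def)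
  then have bc: "cadj (cm j) b c" using assms gadj_cyc by blast
  then have "c < cm j" by (simp add: cadj_def)
  then have ca: "cadj (cm j) c a" using assms gadj_cyc by blast
  define x where "x i = [a,b,c,a] ! i" for i
  have "\<forall>i<3. cadj (cm j) (x i) (x (Suc i))"
  proof (intro allI impI)
    fix i :: nat assume "i < 3"
    then have "i = 0 \<or> i = 1 \<or> i = 2" by auto
    then show "cadj (cm j) (x i) (x (Suc i))" using ab bc ca by (auto simp: x_def)
  qed
  moreover have "x 3 = x 0" by (simp add: x_def)
  ultimately show False using no_short_odd_walk[of 3 "cm j" x] by (simp add: cm_def)
qed

lemma hom_big:
  assumes hom: "\<forall>u v. gadj k u v \<longrightarrow> gadj j (\<phi> u) (\<phi> v)" and kj: "j < k"
  shows False
proof -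
  let ?C = "{cm k..<NN k}"
  have edge: "gadj k u v" if "u \<in> ?C" "v \<in> ?C" "u \<noteq> v" for u v
    using that by (auto simp: gadj_def)
  have inj: "inj_on \<phi> ?C"
  proof (rule inj_onI)
    fix u v assume "u \<in> ?C" "v \<in> ?C" "\<phi> u = \<phi> v"
    then show "u = v" using edge hom gadj_irrefl by metis
  qed
  have img: "\<phi> u \<in> {cm j..<NN j}" if u: "u \<in> ?C" for u
  proof -
    obtain v w where vw: "v \<in> ?C" "w \<in> ?C" "v \<noteq> u" "w \<noteq> u" "v \<noteq> w"
    proof -
      have "card ?C \<ge> 4" by (simp add: NN_def)
      then have "card (?C - {u}) \<ge> 3" using u by (simp add: card_Diff_singleton)
      then obtain v where v: "v \<in> ?C - {u}"
        by (metis card.empty ex_in_conv not_numeral_le_zero)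
      then have "card (?C - {u} - {v}) \<ge> 2" using \<open>card (?C - {u}) \<ge> 3\<close> by (simp add: card_Diff_singleton)
      then obtain w where "w \<in> ?C - {u} - {v}"
        by (metis card.empty ex_in_conv not_numeral_le_zero)
      with v that show ?thesis by auto
    qed
    have e1: "gadj j (\<phi> u) (\<phi> v)" using hom edge u vw by metis
    have e2: "gadj j (\<phi> v) (\<phi> w)" using hom edge u vw by metis
    have e3: "gadj j (\<phi> w) (\<phi> u)" using hom edge u vw by metis
    have "\<not> \<phi> u < cm j" using tri_free e1 e2 e3 by blast
    moreover have "\<phi> u < NN j" using gadj_lt e1 by blast
    ultimately show ?thesis by simp
  qed
  have "card ?C \<le> card {cm j..<NN j}"
    using card_inj_on_le[OF inj] img by (meson finite_atLeastLessThan image_subsetI)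
  then show False using kj by (simp add: NN_def)
qed

lemma hom_small:
  assumes hom: "\<forall>u v. gadj k u v \<longrightarrow> gadj j (\<phi> u) (\<phi> v)" and kj: "k < j"
    and e: "gadj k u v" and small: "\<phi> u < 2"
  shows False
proof (cases "u < cm k")
  case False
  then have "cm k \<le> v" "v < NN k" "u < NN k" "u \<noteq> v" using e by (auto simp: gadj_def cadj_def)
  obtain w where w: "w \<in> {cm k..<NN k}" "w \<noteq> u" "w \<noteq> v"
  proof -
    have sub: "{u,v} \<subseteq> {cm k..<NN k}" using False \<open>v < NN k\<close> \<open>u < NN k\<close> \<open>cm k \<le> v\<close> by auto
    have "card ({cm k..<NN k} - {u,v}) = card {cm k..<NN k} - card {u,v}"
      using sub by (simp add: card_Diff_subset)
    then have "card ({cm k..<NN k} - {u,v}) \<ge> 2" using \<open>u \<noteq> v\<close> by (simp add: NN_def)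
    then obtain w where "w \<in> {cm k..<NN k} - {u,v}"
      by (metis card.empty ex_in_conv not_numeral_le_zero)
    with that show ?thesis by auto
  qed
  have "gadj k v w" "gadj k w u" using w False \<open>cm k \<le> v\<close> \<open>v < NN k\<close> \<open>u < NN k\<close>
    by (auto simp: gadj_def)
  then show False using tri_free[of j "\<phi> u" "\<phi> v" "\<phi> w"] hom e small
    by (simp add: cm_def)
next
  case True
  let ?m = "cm k"
  define x where "x i = \<phi> ((u + i) mod ?m)" for i
  have cons: "gadj j (x i) (x (Suc i))" for i
  proof -
    have "cadj ?m ((u + i) mod ?m) ((u + Suc i) mod ?m)"
      by (auto simp: cadj_def cm_def mod_Suc_eq)
    then show ?thesis using hom by (auto simp: x_def gadj_def)
  qed
  have x0: "x 0 = \<phi> u" using True by (simp add: x_def)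
  have small': "x i < cm j" for i
  proof (induction i)
    case 0 then show ?case using x0 small by (simp add: cm_def)
  next
    case (Suc i)
    then show ?case using gadj_cyc[OF cons[of i]] by (simp add: cadj_def)
  qed
  have "\<forall>i<?m. cadj (cm j) (x i) (x (Suc i))" using gadj_cyc cons small' by blast
  moreover have "x ?m = x 0" by (simp add: x_def)
  moreover have "odd ?m" by (simp add: cm_def)
  moreover have "?m < cm j" using kj by (simp add: cm_def)
  ultimately show False using no_short_odd_walk by blast
qed




definition pt :: "nat \<Rightarrow> nat \<Rightarrow> bool list" where
 "pt k v = map (\<lambda>i. (i div NN k = v \<or> i mod NN k = v) \<and> \<not> gadj k (i div NN k) (i mod NN k)) [0..<NN k * NN k]"

definition dis :: "bool list \<Rightarrow> bool list \<Rightarrow> bool" where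
 "dis xs ys \<longleftrightarrow> (\<forall>i<length xs. \<not> (xs!i \<and> ys!i))"

definition zer :: "nat \<Rightarrow> bool list" where "zer n = replicate n False"

lemma NN_pos: "NN k > 0" by (simp add: NN_def)

lemma pt_len: "length (pt k v) = NN k * NN k" by (simp add: pt_def)

lemma pt_nth: "i < NN k * NN k \<Longrightarrow> pt k v ! i = ((i div NN k = v \<or> i mod NN k = v) \<and> \<not> gadj k (i div NN k) (i mod NN k))"
  by (simp add: pt_def)

lemma idx: "u < NN k \<Longrightarrow> v < NN k \<Longrightarrow> u * NN k + v < NN k * NN k \<and> (u * NN k + v) div NN k = u \<and> (u * NN k + v) mod NN k = v"
proof -
  assume a: "u < NN k" "v < NN k"
  have "u * NN k + v < (u+1) * NN k" using a by simp
  also have "\<dots> \<le> NN k * NN k" using a by (intro mult_right_mono) auto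
  finally show ?thesis using a by simp
qed

lemma pt_dis:
  assumes "u < NN k" "v < NN k"
  shows "dis (pt k u) (pt k v) \<longleftrightarrow> gadj k u v"
proof
  assume d: "dis (pt k u) (pt k v)"
  show "gadj k u v"
  proof (rule ccontr)
    assume n: "\<not> gadj k u v"
    have "pt k u ! (u * NN k + v) \<and> pt k v ! (u * NN k + v)"
      using idx[OF assms] n by (simp add: pt_nth)
    then show False using d idx[OF assms] unfolding dis_def pt_len by metis
  qed
next
  assume g: "gadj k u v"
  show "dis (pt k u) (pt k v)"
    unfolding dis_def pt_len
  proof (intro allI impI notI)
    fix i assume i: "i < NN k * NN k" and b: "pt k u ! i \<and> pt k v ! i"
    have uv: "u \<noteq> v" using g gadj_irrefl by metis
    from b i have "(i div NN k = u \<or> i mod NN k = u) \<and> (i div NN k = v \<or> i mod NN k = v) \<and> \<not> gadj k (i div NN k) (i mod NN k)"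
      by (simp add: pt_nth)
    then show False using uv g gadj_sym gadj_irrefl by metis
  qed
qed

lemma pt_nz: "v < NN k \<Longrightarrow> pt k v \<noteq> zer (NN k * NN k)"
proof
  assume v: "v < NN k" and e: "pt k v = zer (NN k * NN k)"
  have "pt k v ! (v * NN k + v)" using idx[OF v v] gadj_irrefl by (simp add: pt_nth)
  then show False using e idx[OF v v] by (simp add: zer_def)
qed

lemma pt_inj: "u < NN k \<Longrightarrow> v < NN k \<Longrightarrow> pt k u = pt k v \<Longrightarrow> u = v"
proof (rule ccontr)
  assume u: "u < NN k" and v: "v < NN k" and e: "pt k u = pt k v" and n: "u \<noteq> v"
  have "pt k u ! (u * NN k + u)" using idx[OF u u] gadj_irrefl by (simp add: pt_nth)
  moreover have "\<not> pt k v ! (u * NN k + u)" using idx[OF u u] n by (simp add: pt_nth)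
  ultimately show False using e by simp
qed




definition Pres :: "nat \<Rightarrow> pfun \<Rightarrow> bool" where
 "Pres k F \<longleftrightarrow> (\<forall>r. (\<forall>v<NN k. r v \<in> dom (snd F)) \<and> (\<forall>u v. gadj k u v \<longrightarrow> dis (r u) (r v))
     \<longrightarrow> (\<forall>u v. gadj k u v \<longrightarrow> \<not> (snd F (r u) = Some True \<and> snd F (r v) = Some True)))"

definition wit :: "nat \<Rightarrow> pfun" where
 "wit k = (NN k * NN k, \<lambda>xs. if \<exists>v<NN k. xs = pt k v then Some (\<exists>v<2. xs = pt k v) else None)"

lemma wit_val: assumes v: "v < NN k" shows "snd (wit k) (pt k v) = Some (v < 2)"
proof -
  have e: "\<exists>w<NN k. pt k v = pt k w" using v by blast
  have n2: "2 \<le> NN k" by (simp add: NN_def)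
  have "(\<exists>w<2. pt k v = pt k w) = (v < 2)"
  proof
    assume "\<exists>w<2. pt k v = pt k w"
    then obtain w where "w < 2" "pt k v = pt k w" by blast
    then show "v < 2" using pt_inj[OF v, of w] n2 by simp
  qed blast
  then show ?thesis using e by (simp add: wit_def)
qed

lemma wit_P2: "wit k \<in> P2"
  using NN_pos[of k] by (auto simp: P2_def is_pfun_def wit_def pt_len split: if_splits)

lemma wit_zer: "zer (fst (wit k)) \<notin> dom (snd (wit k))"
proof -
  have "\<not> (\<exists>v<NN k. zer (NN k * NN k) = pt k v)" using pt_nz[of _ k] by metis
  then show ?thesis by (simp add: wit_def dom_def)
qed

lemma wit_notPres: "\<not> Pres k (wit k)"
proof
  assume p: "Pres k (wit k)"
  have g: "gadj k 0 1" by (simp add: gadj_def cadj_def cm_def)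
  have "\<forall>v<NN k. pt k v \<in> dom (snd (wit k))" using wit_val by blast
  moreover have "\<forall>u v. gadj k u v \<longrightarrow> dis (pt k u) (pt k v)" using pt_dis gadj_lt by blast
  ultimately have "\<not> (snd (wit k) (pt k 0) = Some True \<and> snd (wit k) (pt k 1) = Some True)"
    using p g unfolding Pres_def by blast
  then show False using wit_val[of 0 k] wit_val[of 1 k] by (simp add: NN_def)
qed

lemma wit_Pres: assumes "j \<noteq> k" shows "Pres k (wit j)"
  unfolding Pres_def
proof (intro allI impI)
  fix r u v
  assume a: "(\<forall>v<NN k. r v \<in> dom (snd (wit j))) \<and> (\<forall>u v. gadj k u v \<longrightarrow> dis (r u) (r v))"
    and e: "gadj k u v"
  define \<phi> where "\<phi> v = (SOME w. w < NN j \<and> r v = pt j w)" for v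
  have ph: "\<phi> v < NN j \<and> r v = pt j (\<phi> v)" if "v < NN k" for v
  proof -
    have "snd (wit j) (r v) \<noteq> None" using a that by blast
    then have "\<exists>w. w < NN j \<and> r v = pt j w" by (auto simp: wit_def split: if_splits)
    then show ?thesis unfolding \<phi>_def by (rule someI_ex)
  qed
  have hom: "\<forall>u v. gadj k u v \<longrightarrow> gadj j (\<phi> u) (\<phi> v)"
  proof (intro allI impI)
    fix u v assume g: "gadj k u v"
    then have "u < NN k" "v < NN k" using gadj_lt by auto
    then have p1: "\<phi> u < NN j" "r u = pt j (\<phi> u)" "\<phi> v < NN j" "r v = pt j (\<phi> v)" using ph by auto
    have "dis (r u) (r v)" using a g by blast
    then show "gadj j (\<phi> u) (\<phi> v)" using p1 pt_dis by simp
  qed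
  show "\<not> (snd (wit j) (r u) = Some True \<and> snd (wit j) (r v) = Some True)"
  proof
    assume t: "snd (wit j) (r u) = Some True \<and> snd (wit j) (r v) = Some True"
    have uv: "u < NN k" "v < NN k" using gadj_lt e by auto
    have "\<phi> u < 2" using t ph[OF uv(1)] wit_val[of "\<phi> u" j] by auto
    show False
    proof (cases "k < j")
      case True then show False using hom_small[OF hom True e \<open>\<phi> u < 2\<close>] by simp
    next
      case False then have "j < k" using assms by simp
      then show False using hom_big[OF hom] by blast
    qed
  qed
qed




definition Str :: "pfun set \<Rightarrow> pfun set" where
 "Str D = {F. \<exists>h\<in>D. \<exists>A. F = (fst h, snd h |` A)}"

definition XS :: "pfun set \<Rightarrow> nat set \<Rightarrow> pfun set" where
 "XS D S = Str D \<union> {F \<in> P2. zer (fst F) \<notin> dom (snd F) \<and> (\<forall>k\<in>S. Pres k F)}"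

lemma len_dom: "F \<in> P2 \<Longrightarrow> xs \<in> dom (snd F) \<Longrightarrow> length xs = fst F"
  by (auto simp: P2_def is_pfun_def)

lemma T02_dis:
  assumes "F \<in> T02" "length as = fst F" "length bs = fst F" "dis as bs"
  shows "\<not> (the (snd F as) \<and> the (snd F bs))"
proof -
  have "\<forall>i < fst F. (as ! i, bs ! i) \<in> rho02"
    using assms(2,4) by (auto simp: dis_def rho02_def)
  then have "(the (snd F as), the (snd F bs)) \<in> rho02"
    using assms unfolding T02_def preserves_def by blast
  then show ?thesis by (auto simp: rho02_def)
qed

lemma T02_total: "F \<in> T02 \<Longrightarrow> length xs = fst F \<Longrightarrow> xs \<in> dom (snd F)"
  by (auto simp: T02_def O2_def is_total_def)

lemma T02_P2: "F \<in> T02 \<Longrightarrow> F \<in> P2"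
  by (auto simp: T02_def O2_def)

lemma T02_zer: "F \<in> T02 \<Longrightarrow> snd F (zer (fst F)) = Some False"
proof -
  assume F: "F \<in> T02"
  have d: "zer (fst F) \<in> dom (snd F)" using T02_total[OF F] by (simp add: zer_def)
  have "dis (zer (fst F)) (zer (fst F))" by (simp add: dis_def zer_def)
  then have "\<not> (the (snd F (zer (fst F))) \<and> the (snd F (zer (fst F))))"
    using T02_dis[OF F, of "zer (fst F)" "zer (fst F)"] by (simp add: zer_def)
  then show ?thesis using d by auto
qed

lemma Pres_T02: "F \<in> T02 \<Longrightarrow> Pres k F"
  unfolding Pres_def
proof (intro allI impI notI)
  fix r u v
  assume F: "F \<in> T02" and a: "(\<forall>v<NN k. r v \<in> dom (snd F)) \<and> (\<forall>u v. gadj k u v \<longrightarrow> dis (r u) (r v))"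
    and e: "gadj k u v" and t: "snd F (r u) = Some True \<and> snd F (r v) = Some True"
  have "u < NN k" "v < NN k" using gadj_lt e by auto
  then have "length (r u) = fst F" "length (r v) = fst F" using a len_dom T02_P2[OF F] by auto
  then show False using T02_dis[OF F] a e t by fastforce
qed

lemma Pres_restr: "Pres k F \<Longrightarrow> Pres k (fst F, snd F |` A)"
  unfolding Pres_def
proof (intro allI impI notI)
  fix r u v
  assume p: "\<forall>r. (\<forall>v<NN k. r v \<in> dom (snd F)) \<and> (\<forall>u v. gadj k u v \<longrightarrow> dis (r u) (r v))
     \<longrightarrow> (\<forall>u v. gadj k u v \<longrightarrow> \<not> (snd F (r u) = Some True \<and> snd F (r v) = Some True))"
    and a: "(\<forall>v<NN k. r v \<in> dom (snd (fst F, snd F |` A))) \<and> (\<forall>u v. gadj k u v \<longrightarrow> dis (r u) (r v))"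
    and e: "gadj k u v"
    and t: "snd (fst F, snd F |` A) (r u) = Some True \<and> snd (fst F, snd F |` A) (r v) = Some True"
  have "\<forall>v<NN k. r v \<in> dom (snd F)" using a by (auto simp: restrict_map_def split: if_splits)
  moreover have "snd F (r u) = Some True \<and> snd F (r v) = Some True"
    using t by (auto simp: restrict_map_def split: if_splits)
  ultimately show False using p a e by blast
qed

lemma Pres_comp:
  assumes pf: "Pres k f" and pg: "\<forall>g\<in>set gs. Pres k g"
  shows "Pres k (pcomp m f gs)"
  unfolding Pres_def
proof (intro allI impI notI)
  fix r u v
  assume a: "(\<forall>v<NN k. r v \<in> dom (snd (pcomp m f gs))) \<and> (\<forall>u v. gadj k u v \<longrightarrow> dis (r u) (r v))"
    and e: "gadj k u v"
    and t: "snd (pcomp m f gs) (r u) = Some True \<and> snd (pcomp m f gs) (r v) = Some True"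
  define r' where "r' v = map (\<lambda>g. the (snd g (r v))) gs" for v
  have dv: "length (r v) = m \<and> (\<forall>g\<in>set gs. snd g (r v) \<noteq> None) \<and> snd (pcomp m f gs) (r v) = snd f (r' v)"
    if "v < NN k" for v
  proof -
    have "snd (pcomp m f gs) (r v) \<noteq> None" using a that by blast
    then show ?thesis by (simp add: pcomp_def r'_def split: if_splits) force
  qed
  have gdom: "\<forall>v<NN k. r v \<in> dom (snd g)" if "g \<in> set gs" for g using dv that by auto
  have r'd: "\<forall>v<NN k. r' v \<in> dom (snd f)" using dv a by (auto simp: dom_def)
  have r'dis: "dis (r' x) (r' y)" if xy: "gadj k x y" for x y
    unfolding dis_def
  proof (intro allI impI notI)
    fix i assume i: "i < length (r' x)" and b: "r' x ! i \<and> r' y ! i"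
    let ?g = "gs ! i"
    have gi: "?g \<in> set gs" using i by (simp add: r'_def)
    have xy': "x < NN k" "y < NN k" using gadj_lt xy by auto
    have "\<not> (snd ?g (r x) = Some True \<and> snd ?g (r y) = Some True)"
      using pg gi gdom[OF gi] a xy unfolding Pres_def by blast
    moreover have "snd ?g (r x) \<noteq> None" "snd ?g (r y) \<noteq> None" using dv xy' gi by auto
    ultimately show False using b i by (auto simp: r'_def)
  qed
  have "\<not> (snd f (r' u) = Some True \<and> snd f (r' v) = Some True)"
    using pf r'd r'dis e unfolding Pres_def by blast
  moreover have "u < NN k" "v < NN k" using gadj_lt e by auto
  ultimately show False using t dv by auto
qed




lemma O2_total: "h \<in> O2 \<Longrightarrow> length xs = fst h \<Longrightarrow> snd h xs \<noteq> None"
  by (auto simp: O2_def is_total_def)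

lemma restr_UNIV: "m |` UNIV = m" by (simp add: restrict_map_def)

lemma D_Str: "D \<subseteq> Str D"
proof
  fix h assume "h \<in> D"
  then show "h \<in> Str D" unfolding Str_def
    by (intro CollectI bexI[of _ h] exI[of _ UNIV]) (simp_all add: restr_UNIV)
qed

lemma Str_restr: assumes "F \<in> Str D" shows "(fst F, snd F |` B) \<in> Str D"
proof -
  obtain h A where h: "h \<in> D" "F = (fst h, snd h |` A)" using assms by (auto simp: Str_def)
  then have "(fst F, snd F |` B) = (fst h, snd h |` (A \<inter> B))" by simp
  then show ?thesis using h(1) unfolding Str_def by blast
qed

lemma Str_P2: "D \<subseteq> O2 \<Longrightarrow> Str D \<subseteq> P2"
proof
  fix F assume D: "D \<subseteq> O2" and "F \<in> Str D"
  then obtain h A where h: "h \<in> D" "F = (fst h, snd h |` A)" by (auto simp: Str_def)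
  have "h \<in> O2" using D h by blast
  then have "is_pfun h" by (simp add: O2_def P2_def)
  then show "F \<in> P2" using h unfolding P2_def is_pfun_def by auto
qed

lemma Str_O2: assumes "D \<subseteq> O2" shows "Str D \<inter> O2 \<subseteq> D"
proof
  fix F assume F: "F \<in> Str D \<inter> O2"
  then obtain h A where h: "h \<in> D" "F = (fst h, snd h |` A)" by (auto simp: Str_def)
  have "snd h |` A = snd h"
  proof
    fix x show "(snd h |` A) x = snd h x"
    proof (cases "length x = fst h")
      case True
      then have "x \<in> dom (snd h |` A)" using F h by (auto simp: O2_def is_total_def)
      then show ?thesis by (auto simp: restrict_map_def split: if_splits)
    next
      case False
      then have "snd h x = None" using h assms by (auto simp: O2_def P2_def is_pfun_def)
      then show ?thesis by (simp add: restrict_map_def)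
    qed
  qed
  then show "F \<in> D" using h by simp
qed

lemma Str_T02:
  assumes "D \<subseteq> T02" "F \<in> Str D"
  shows "Pres k F" "zer (fst F) \<in> dom (snd F) \<Longrightarrow> snd F (zer (fst F)) = Some False"
proof -
  obtain h A where h: "h \<in> D" "F = (fst h, snd h |` A)" using assms by (auto simp: Str_def)
  have hT: "h \<in> T02" using h assms by auto
  show "Pres k F" using Pres_restr[OF Pres_T02[OF hT]] h by simp
  show "snd F (zer (fst F)) = Some False" if "zer (fst F) \<in> dom (snd F)"
    using that T02_zer[OF hT] h by (auto simp: restrict_map_def split: if_splits)
qed

lemma pc_comp:
  assumes "partial_clone D" "m \<ge> 1" "f \<in> D" "set gs \<subseteq> D" "fst f = length gs" "\<forall>g\<in>set gs. fst g = m"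
  shows "pcomp m f gs \<in> D"
  using assms unfolding partial_clone_def by meson

lemma ex_list_all2: "(\<forall>x\<in>set xs. \<exists>y. P x y) \<Longrightarrow> \<exists>ys. list_all2 P xs ys"
  by (induction xs) auto

lemma Str_comp:
  assumes D: "total_clone D" and m: "m \<ge> 1" and f: "f \<in> Str D" and gs: "set gs \<subseteq> Str D"
    and fl: "fst f = length gs" and gm: "\<forall>g\<in>set gs. fst g = m"
  shows "pcomp m f gs \<in> Str D"
proof -
  have DO: "D \<subseteq> O2" and pc: "partial_clone D" using D by (auto simp: total_clone_def)
  obtain h A where h: "h \<in> D" "f = (fst h, snd h |` A)" using f by (auto simp: Str_def)
  have "\<forall>g\<in>set gs. \<exists>h'. h' \<in> D \<and> (\<exists>B. g = (fst h', snd h' |` B))"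
  proof
    fix g assume "g \<in> set gs"
    then have "g \<in> Str D" using gs by blast
    then show "\<exists>h'. h' \<in> D \<and> (\<exists>B. g = (fst h', snd h' |` B))" unfolding Str_def mem_Collect_eq Bex_def .
  qed
  then have "\<exists>hs. list_all2 (\<lambda>g h'. h' \<in> D \<and> (\<exists>B. g = (fst h', snd h' |` B))) gs hs"
    by (rule ex_list_all2)
  then obtain hs where hs: "list_all2 (\<lambda>g h'. h' \<in> D \<and> (\<exists>B. g = (fst h', snd h' |` B))) gs hs"
    by (rule exE)
  have len: "length hs = length gs" using list_all2_lengthD[OF hs] by simp
  have hsi: "hs ! i \<in> D \<and> (\<exists>B. gs ! i = (fst (hs ! i), snd (hs ! i) |` B))" if "i < length gs" for i
    using hs that by (simp add: list_all2_conv_all_nth)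
  have hsD: "set hs \<subseteq> D"
  proof
    fix h' assume "h' \<in> set hs"
    then obtain i where "i < length hs" "hs ! i = h'" by (meson in_set_conv_nth)
    then show "h' \<in> D" using hsi len by metis
  qed
  have hsm: "\<forall>h'\<in>set hs. fst h' = m"
  proof
    fix h' assume "h' \<in> set hs"
    then obtain i where i0: "i < length hs" "hs ! i = h'" by (meson in_set_conv_nth)
    then have i: "i < length gs" "h' = hs ! i" using len by auto
    then obtain B where "gs ! i = (fst h', snd h' |` B)" using hsi by blast
    moreover have "fst (gs ! i) = m" using gm i by simp
    ultimately show "fst h' = m" by simp
  qed
  define H where "H = pcomp m h hs"
  have "fst h = length hs" using h fl len by simp
  then have HD: "H \<in> D" unfolding H_def using pc_comp[OF pc m h(1) hsD _ hsm] by simp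
  have eq: "snd (pcomp m f gs) xs = snd H xs" if xs: "xs \<in> dom (snd (pcomp m f gs))" for xs
  proof -
    have nn: "snd (pcomp m f gs) xs \<noteq> None" using xs by auto
    have cv: "length xs = m \<and> (\<forall>g\<in>set gs. snd g xs \<noteq> None) \<and> snd (pcomp m f gs) xs = snd f (map (\<lambda>g. the (snd g xs)) gs)"
      using nn by (simp add: pcomp_def split: if_splits) force
    then have c: "length xs = m" "\<forall>g\<in>set gs. snd g xs \<noteq> None"
      and v: "snd (pcomp m f gs) xs = snd f (map (\<lambda>g. the (snd g xs)) gs)" by auto
    have mp: "map (\<lambda>g. the (snd g xs)) gs = map (\<lambda>h'. the (snd h' xs)) hs"
    proof (rule nth_equalityI)
      show "length (map (\<lambda>g. the (snd g xs)) gs) = length (map (\<lambda>h'. the (snd h' xs)) hs)"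
        using len by simp
      fix i assume i: "i < length (map (\<lambda>g. the (snd g xs)) gs)"
      then have i': "i < length gs" by simp
      then obtain B where B: "gs ! i = (fst (hs ! i), snd (hs ! i) |` B)" using hsi by blast
      have "snd (gs ! i) xs \<noteq> None" using c i' by simp
      then have "snd (gs ! i) xs = snd (hs ! i) xs" using B by (auto simp: restrict_map_def split: if_splits)
      then show "map (\<lambda>g. the (snd g xs)) gs ! i = map (\<lambda>h'. the (snd h' xs)) hs ! i"
        using i' len by simp
    qed
    have tot: "\<forall>h'\<in>set hs. snd h' xs \<noteq> None"
    proof
      fix h' assume a: "h' \<in> set hs"
      then have "h' \<in> O2" using hsD DO by blast
      moreover have "length xs = fst h'" using hsm a c by simp
      ultimately show "snd h' xs \<noteq> None" by (rule O2_total)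
    qed
    have "snd f (map (\<lambda>g. the (snd g xs)) gs) \<noteq> None" using v nn by simp
    then have "snd f (map (\<lambda>g. the (snd g xs)) gs) = snd h (map (\<lambda>g. the (snd g xs)) gs)"
      using h by (auto simp: restrict_map_def split: if_splits)
    then show ?thesis using v mp tot c by (simp add: H_def pcomp_def)
  qed
  have "pcomp m f gs = (fst H, snd H |` dom (snd (pcomp m f gs)))"
  proof -
    have "fst H = fst (pcomp m f gs)" by (simp add: H_def pcomp_def)
    moreover have "snd (pcomp m f gs) = snd H |` dom (snd (pcomp m f gs))"
    proof
      fix xs show "snd (pcomp m f gs) xs = (snd H |` dom (snd (pcomp m f gs))) xs"
        using eq[of xs] by (cases "xs \<in> dom (snd (pcomp m f gs))") (auto simp: restrict_map_def)
    qed
    ultimately show ?thesis by (metis prod.collapse)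
  qed
  then show ?thesis using HD unfolding Str_def by blast
qed




lemma map_const_repl: "(\<forall>x\<in>set xs. h x = c) \<Longrightarrow> map h xs = replicate (length xs) c"
  by (induction xs) auto

lemma pcomp_P2: "m \<ge> 1 \<Longrightarrow> pcomp m f gs \<in> P2"
  by (auto simp: pcomp_def P2_def is_pfun_def split: if_splits)

lemma XS_P2: "total_clone D \<Longrightarrow> XS D S \<subseteq> P2"
  using Str_P2[of D] by (auto simp: XS_def total_clone_def)

lemma XS_Pres: assumes "D \<subseteq> T02" "F \<in> XS D S" "k \<in> S" shows "Pres k F"
proof (cases "F \<in> Str D")
  case True then show ?thesis using Str_T02(1)[OF assms(1) True] by blast
next
  case False then show ?thesis using assms by (auto simp: XS_def)
qed

lemma XS_I:
  assumes D: "total_clone D" and T: "D \<subseteq> T02"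
  shows "XS D S \<in> I_str D"
proof -
  have DO: "D \<subseteq> O2" and pc: "partial_clone D" using D by (auto simp: total_clone_def)
  let ?B = "{F \<in> P2. zer (fst F) \<notin> dom (snd F) \<and> (\<forall>k\<in>S. Pres k F)}"
  have X: "XS D S = Str D \<union> ?B" by (simp add: XS_def)
  have comp: "pcomp m f gs \<in> XS D S" if m: "m \<ge> 1" and f: "f \<in> XS D S" and gs: "set gs \<subseteq> XS D S"
    and fl: "fst f = length gs" and gm: "\<forall>g\<in>set gs. fst g = m" for m f gs
  proof (cases "f \<in> Str D \<and> set gs \<subseteq> Str D")
    case True
    then show ?thesis using Str_comp[OF D m _ _ fl gm] X by blast
  next
    case False
    have z: "zer m \<notin> dom (snd (pcomp m f gs))"
    proof
      assume zd: "zer m \<in> dom (snd (pcomp m f gs))"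
      then have nn: "snd (pcomp m f gs) (zer m) \<noteq> None" by auto
      have cv: "(\<forall>g\<in>set gs. snd g (zer m) \<noteq> None) \<and> snd f (map (\<lambda>g. the (snd g (zer m))) gs) \<noteq> None"
        using nn by (simp add: pcomp_def split: if_splits)
      have gS: "g \<in> Str D \<and> snd g (zer m) = Some False" if g: "g \<in> set gs" for g
      proof -
        have "g \<in> XS D S" using g gs by blast
        moreover have "zer (fst g) \<in> dom (snd g)" using cv g gm by auto
        ultimately have "g \<in> Str D" using X by blast
        then show ?thesis using Str_T02(2)[OF T, of g] \<open>zer (fst g) \<in> dom (snd g)\<close> gm g by auto
      qed
      have "map (\<lambda>g. the (snd g (zer m))) gs = zer (fst f)"
        using map_const_repl[of gs "\<lambda>g. the (snd g (zer m))" False] gS fl by (simp add: zer_def)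
      then have "zer (fst f) \<in> dom (snd f)" using cv by auto
      then have "f \<in> Str D" using f X by blast
      moreover have "set gs \<subseteq> Str D" using gS by blast
      ultimately show False using False by blast
    qed
    have "\<forall>k\<in>S. Pres k (pcomp m f gs)"
    proof
      fix k assume k: "k \<in> S"
      have "Pres k f" using XS_Pres[OF T f k] .
      moreover have "\<forall>g\<in>set gs. Pres k g"
      proof
        fix g assume "g \<in> set gs"
        then have "g \<in> XS D S" using gs by blast
        then show "Pres k g" using XS_Pres[OF T _ k] by blast
      qed
      ultimately show "Pres k (pcomp m f gs)" by (rule Pres_comp)
    qed
    moreover have "fst (pcomp m f gs) = m" by (simp add: pcomp_def)
    ultimately have "pcomp m f gs \<in> ?B" using z pcomp_P2[OF m] by simp
    then show ?thesis using X by blast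
  qed
  have pcl: "partial_clone (XS D S)"
    unfolding partial_clone_def
  proof (intro conjI allI impI)
    show "XS D S \<subseteq> P2" using XS_P2[OF D] .
    fix n i :: nat assume "1 \<le> n \<and> i < n"
    then have "proj n i \<in> D" using pc by (simp add: partial_clone_def)
    then show "proj n i \<in> XS D S" using D_Str X by blast
  next
    fix m f gs
    assume "1 \<le> m \<and> f \<in> XS D S \<and> set gs \<subseteq> XS D S \<and> fst f = length gs \<and> (\<forall>g\<in>set gs. fst g = m)"
    then show "pcomp m f gs \<in> XS D S" using comp by blast
  qed
  have str: "(fst F, snd F |` A) \<in> XS D S" if F: "F \<in> XS D S" for F A
  proof (cases "F \<in> Str D")
    case True then show ?thesis using Str_restr X by blast
  next
    case False
    then have FB: "F \<in> ?B" using F X by blast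
    have p: "F \<in> P2" and zz: "zer (fst F) \<notin> dom (snd F)" and pr: "\<forall>k\<in>S. Pres k F" using FB by auto
    have "(fst F, snd F |` A) \<in> P2" using p unfolding P2_def is_pfun_def by auto
    moreover have "zer (fst F) \<notin> dom (snd F |` A)" using zz by simp
    moreover have "\<forall>k\<in>S. Pres k (fst F, snd F |` A)" using pr Pres_restr by blast
    ultimately have "(fst F, snd F |` A) \<in> ?B" by simp
    then show ?thesis using X by blast
  qed
  have tot: "XS D S \<inter> O2 = D"
  proof
    show "D \<subseteq> XS D S \<inter> O2" using D_Str DO X by blast
    have "?B \<inter> O2 = {}"
    proof (rule ccontr)
      assume "?B \<inter> O2 \<noteq> {}"
      then obtain F where F: "F \<in> ?B" "F \<in> O2" by blast
      then have "zer (fst F) \<in> dom (snd F)" by (auto simp: O2_def is_total_def zer_def)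
      then show False using F by blast
    qed
    then show "XS D S \<inter> O2 \<subseteq> D" using Str_O2[OF DO] X by blast
  qed
  show ?thesis using pcl str tot by (auto simp: I_str_def strong_partial_clone_def)
qed

lemma wit_XS:
  assumes D: "total_clone D" and T: "D \<subseteq> T02"
  shows "wit j \<in> XS D S \<longleftrightarrow> j \<notin> S"
proof -
  have ns: "wit j \<notin> Str D" using Str_T02(1)[OF T] wit_notPres by blast
  show ?thesis
  proof
    assume "wit j \<in> XS D S"
    then have "\<forall>k\<in>S. Pres k (wit j)" using ns by (auto simp: XS_def)
    then show "j \<notin> S" using wit_notPres by blast
  next
    assume "j \<notin> S"
    then have "\<forall>k\<in>S. Pres k (wit j)" using wit_Pres by (metis (full_types))
    then show "wit j \<in> XS D S" using wit_P2 wit_zer by (auto simp: XS_def)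
  qed
qed

definition enc :: "pfun \<Rightarrow> nat \<times> bool option list" where
  "enc F = (fst F, map (snd F) (List.n_lists (fst F) [False, True]))"

lemma enc_inj: "inj_on enc P2"
proof (rule inj_onI)
  fix F G assume F: "F \<in> P2" and G: "G \<in> P2" and e: "enc F = enc G"
  have n: "fst F = fst G" using e by (simp add: enc_def)
  have mp: "map (snd F) (List.n_lists (fst F) [False, True]) = map (snd G) (List.n_lists (fst F) [False, True])"
    using e n by (simp add: enc_def)
  have "snd F xs = snd G xs" for xs
  proof (cases "length xs = fst F")
    case True
    then have "xs \<in> set (List.n_lists (fst F) [False, True])" by (auto simp: set_n_lists)
    then show ?thesis using mp by (simp add: map_eq_conv)
  next
    case False
    then have "xs \<notin> dom (snd F)" "xs \<notin> dom (snd G)" using F G n by (auto simp: P2_def is_pfun_def)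
    then show ?thesis by (simp add: domIff)
  qed
  then show "F = G" using n by (simp add: prod_eq_iff fun_eq_iff)
qed

lemma I_str_sub: "I_str D \<subseteq> Pow P2"
  by (auto simp: I_str_def strong_partial_clone_def partial_clone_def)

theorem mainTheorem4:
  assumes "total_clone D" and "D \<subseteq> T02"
  shows "I_str D \<approx> (UNIV :: real set)"
proof -
  have low: "(UNIV :: nat set set) \<lesssim> I_str D"
    unfolding lepoll_def
  proof (intro exI conjI)
    show "inj_on (XS D) UNIV"
    proof (rule inj_onI)
      fix S S' :: "nat set" assume "XS D S = XS D S'"
      then have "j \<in> S \<longleftrightarrow> j \<in> S'" for j using wit_XS[OF assms, of j S] wit_XS[OF assms, of j S'] by simp
      then show "S = S'" by blast
    qed
    show "XS D ` UNIV \<subseteq> I_str D" using XS_I[OF assms] by blast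
  qed
  have up: "I_str D \<lesssim> (UNIV :: nat set set)"
    unfolding lepoll_def
  proof (intro exI conjI)
    have "inj_on (to_nat \<circ> enc) P2" using enc_inj by (simp add: comp_inj_on)
    then have "inj_on (image (to_nat \<circ> enc)) (Pow P2)" by (rule inj_on_image_Pow)
    then show "inj_on (image (to_nat \<circ> enc)) (I_str D)" by (rule inj_on_subset[OF _ I_str_sub])
    show "image (to_nat \<circ> enc) ` I_str D \<subseteq> UNIV" by simp
  qed
  have "I_str D \<approx> (UNIV :: nat set set)" using lepoll_antisym[OF up low] .
  then show ?thesis by (rule eqpoll_trans[OF _ nat_sets_eqpoll_reals])
qed


end
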